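(* Let $(X,d)$ be a Hadamard space, $\mathbf a$ a mask with associated barycentric scheme $S$, and $x\in\ell^\infty(\mathbb Z^s,X)$. Then for all $n\in\mathbb N_0$, $i\in\mathbb Z^s$ and $z\in X$, $$d\big((S^nx)_i,z\big)\le\sum_{k\in\mathbb Z^s}a^{(n)}_{i-2^nk}\,d(x_k,z),$$ and consequently for all $i,j\in\mathbb Z^s$, $d\big((S^nx)_i,(S^nx)_j\big)\le\sum_{k,\ell\in\mathbb Z^s}a^{(n)}_{i-2^nk}a^{(n)}_{j-2^n\ell}\,d(x_k,x_\ell)$.
   Context: Hadamard space: complete metric space $(X,d)$ such that for any $x_0,x_1\in X$ there is $y$ with $d(z,y)^2\le\frac12d(z,x_0)^2+\frac12d(z,x_1)^2-\frac14d(x_0,x_1)^2$ for all $z$. Mask: finitely supported nonnegative $(a_i)_{i\in\mathbb Z^s}$ with $\sum_j a_{i-2j}=1$ for all $i$. Barycentric scheme: $Sx_i=\operatorname{argmin}_{y\in X}\sum_j a_{i-2j}d^2(x_j,y)$. The sequences $a^{(n)}$ are defined by $a^{(0)}_i=\delta_{i,0}$, $a^{(n+1)}_i=\sum_ja_{i-2j}a^{(n)}_j$. *)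

theory Defs
  imports "HOL-Analysis.Analysis"
begin

definition hadamard_space :: "'a::metric_space itself \<Rightarrow> bool" where
  "hadamard_space _ \<longleftrightarrow> complete (UNIV :: 'a set) \<and>
     (\<forall>x0 x1 :: 'a. \<exists>y. \<forall>z.
        (dist z y)\<^sup>2 \<le> (dist z x0)\<^sup>2 / 2 + (dist z x1)\<^sup>2 / 2 - (dist x0 x1)\<^sup>2 / 4)"

definition fsum :: "('b \<Rightarrow> real) \<Rightarrow> real" where
  "fsum f = (\<Sum>k\<in>{k. f k \<noteq> 0}. f k)"

definition is_mask :: "(int ^ 's \<Rightarrow> real) \<Rightarrow> bool" where
  "is_mask a \<longleftrightarrow> finite {i. a i \<noteq> 0} \<and> (\<forall>i. a i \<ge> 0) \<and>
     (\<forall>i. fsum (\<lambda>j. a (i - 2 *s j)) = 1)"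

definition bary_scheme :: "(int ^ 's \<Rightarrow> real) \<Rightarrow> (int ^ 's \<Rightarrow> 'a::metric_space) \<Rightarrow> (int ^ 's \<Rightarrow> 'a)" where
  "bary_scheme a x = (\<lambda>i. arg_min (\<lambda>y. fsum (\<lambda>j. a (i - 2 *s j) * (dist (x j) y)\<^sup>2)) (\<lambda>_. True))"

fun mask_pow :: "(int ^ 's \<Rightarrow> real) \<Rightarrow> nat \<Rightarrow> int ^ 's \<Rightarrow> real" where
  "mask_pow a 0 = (\<lambda>i. if i = 0 then 1 else 0)"
| "mask_pow a (Suc n) = (\<lambda>i. fsum (\<lambda>j. a (i - 2 *s j) * mask_pow a n j))"

end

theory Submission
  imports Defs
begin

lemma mid_sum:
  fixes p :: "'i \<Rightarrow> 'a::metric_space"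
  assumes J: "finite J" and w: "\<forall>j\<in>J. w j \<ge> 0" and s: "sum w J = 1"
    and c: "\<forall>z. (dist z c)\<^sup>2 \<le> (dist z u)\<^sup>2 / 2 + (dist z v)\<^sup>2 / 2 - (dist u v)\<^sup>2 / 4"
  shows "(\<Sum>j\<in>J. w j * (dist (p j) c)\<^sup>2) \<le>
    (\<Sum>j\<in>J. w j * (dist (p j) u)\<^sup>2) / 2 + (\<Sum>j\<in>J. w j * (dist (p j) v)\<^sup>2) / 2 - (dist u v)\<^sup>2 / 4"
proof -
  have "(\<Sum>j\<in>J. w j * (dist (p j) c)\<^sup>2) \<le> (\<Sum>j\<in>J. w j * ((dist (p j) u)\<^sup>2 / 2 + (dist (p j) v)\<^sup>2 / 2 - (dist u v)\<^sup>2 / 4))"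
    by (intro sum_mono mult_left_mono) (use c w in auto)
  also have "\<dots> = (\<Sum>j\<in>J. w j * (dist (p j) u)\<^sup>2) / 2 + (\<Sum>j\<in>J. w j * (dist (p j) v)\<^sup>2) / 2 - (dist u v)\<^sup>2 / 4 * sum w J"
    by (simp add: algebra_simps sum.distrib sum_subtractf sum_divide_distrib sum_distrib_left sum_distrib_right)
  finally show ?thesis using s by simp
qed

lemma had_mid:
  assumes "hadamard_space TYPE('a::metric_space)"
  shows "\<exists>c. \<forall>z::'a. (dist z c)\<^sup>2 \<le> (dist z u)\<^sup>2 / 2 + (dist z v)\<^sup>2 / 2 - (dist u v)\<^sup>2 / 4"
  using assms unfolding hadamard_space_def by blast

lemma had_complete:
  assumes "hadamard_space TYPE('a::metric_space)"
  shows "complete (UNIV::'a set)"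
  using assms unfolding hadamard_space_def by blast

lemma bary_exists:
  fixes p :: "'i \<Rightarrow> 'a::metric_space"
  assumes H: "hadamard_space TYPE('a)"
    and J: "finite J" and w: "\<forall>j\<in>J. w j \<ge> 0" and s: "sum w J = 1"
  shows "\<exists>b. \<forall>y. (\<Sum>j\<in>J. w j * (dist (p j) b)\<^sup>2) \<le> (\<Sum>j\<in>J. w j * (dist (p j) y)\<^sup>2)"
proof -
  define F where "F y = (\<Sum>j\<in>J. w j * (dist (p j) y)\<^sup>2)" for y
  have F0: "F y \<ge> 0" for y unfolding F_def using w by (intro sum_nonneg) auto
  define m where "m = Inf (range F)"
  have bdd: "bdd_below (range F)" using F0 by (intro bdd_belowI[of _ 0]) auto
  have mle: "m \<le> F y" for y unfolding m_def using bdd by (simp add: cInf_lower)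
  have "\<forall>n. \<exists>y. F y < m + inverse (real (Suc n))"
  proof
    fix n
    have "Inf (range F) < m + inverse (real (Suc n))" unfolding m_def by simp
    then show "\<exists>y. F y < m + inverse (real (Suc n))"
      using cInf_less_iff[OF _ bdd] by auto
  qed
  then obtain y where y: "\<And>n. F (y n) < m + inverse (real (Suc n))" by metis
  have key: "(dist (y n) (y k))\<^sup>2 < 4 * inverse (real (Suc M))" if "n \<ge> M" "k \<ge> M" for n k M
  proof -
    obtain c where c: "\<forall>z. (dist z c)\<^sup>2 \<le> (dist z (y n))\<^sup>2 / 2 + (dist z (y k))\<^sup>2 / 2 - (dist (y n) (y k))\<^sup>2 / 4"
      using had_mid[OF H] by blast
    have "F c \<le> F (y n) / 2 + F (y k) / 2 - (dist (y n) (y k))\<^sup>2 / 4"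
      unfolding F_def by (rule mid_sum[OF J w s c])
    moreover have "m \<le> F c" by (rule mle)
    moreover have "inverse (real (Suc n)) \<le> inverse (real (Suc M))"
      using that by (simp add: le_imp_inverse_le)
    moreover have "inverse (real (Suc k)) \<le> inverse (real (Suc M))"
      using that by (simp add: le_imp_inverse_le)
    ultimately show ?thesis using y[of n] y[of k] by linarith
  qed
  have "Cauchy y"
  proof (rule metric_CauchyI)
    fix e :: real assume e: "e > 0"
    then obtain M where M: "inverse (real (Suc M)) < e\<^sup>2 / 4"
      using reals_Archimedean[of "e\<^sup>2/4"] by auto
    show "\<exists>M. \<forall>m\<ge>M. \<forall>n\<ge>M. dist (y m) (y n) < e"
    proof (intro exI allI impI)
      fix n k assume "n \<ge> M" "k \<ge> M"
      then have "(dist (y n) (y k))\<^sup>2 < e\<^sup>2" using key[of M n k] M by linarith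
      then show "dist (y n) (y k) < e" using e by (simp add: power_less_imp_less_base)
    qed
  qed
  then obtain b where b: "y \<longlonglongrightarrow> b"
    using had_complete[OF H] unfolding complete_def by blast
  have "(\<lambda>n. F (y n)) \<longlonglongrightarrow> F b"
    unfolding F_def by (intro tendsto_intros b)
  moreover have "(\<lambda>n. F (y n)) \<longlonglongrightarrow> m"
  proof (rule tendsto_sandwich[of "\<lambda>_. m" _ _ "\<lambda>n. m + inverse (real (Suc n))"])
    show "\<forall>\<^sub>F n in sequentially. m \<le> F (y n)" using mle by simp
    show "\<forall>\<^sub>F n in sequentially. F (y n) \<le> m + inverse (real (Suc n))" using y by (simp add: less_imp_le)
    show "((\<lambda>n. m) \<longlongrightarrow> m) sequentially" by simp
    show "(\<lambda>n. m + inverse (real (Suc n))) \<longlonglongrightarrow> m"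
      using tendsto_add[OF tendsto_const LIMSEQ_inverse_real_of_nat, of m] by simp
  qed
  ultimately have "F b = m" using LIMSEQ_unique by blast
  then show ?thesis using mle unfolding F_def by metis
qed

lemma variance:
  fixes p :: "'i \<Rightarrow> 'a::metric_space"
  assumes H: "hadamard_space TYPE('a)"
    and J: "finite J" and w: "\<forall>j\<in>J. w j \<ge> 0" and s: "sum w J = 1"
    and b: "\<forall>y. (\<Sum>j\<in>J. w j * (dist (p j) b)\<^sup>2) \<le> (\<Sum>j\<in>J. w j * (dist (p j) y)\<^sup>2)"
  shows "(\<Sum>j\<in>J. w j * (dist (p j) b)\<^sup>2) + (dist z b)\<^sup>2 \<le> (\<Sum>j\<in>J. w j * (dist (p j) z)\<^sup>2)"
proof -
  define F where "F y = (\<Sum>j\<in>J. w j * (dist (p j) y)\<^sup>2)" for y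
  have Fb: "F b \<le> F y" for y using b unfolding F_def by blast
  have ind: "\<forall>z. F b + (1 - (1/2)^n) * (dist z b)\<^sup>2 \<le> F z" for n
  proof (induction n)
    case 0 then show ?case using Fb by simp
  next
    case (Suc n)
    show ?case
    proof
      fix z
      define d where "d = dist z b"
      define q :: real where "q = (1/2)^n"
      have q: "0 \<le> q" "q \<le> 1" unfolding q_def by (auto simp: power_le_one)
      obtain c where c: "\<forall>v. (dist v c)\<^sup>2 \<le> (dist v b)\<^sup>2 / 2 + (dist v z)\<^sup>2 / 2 - (dist b z)\<^sup>2 / 4"
        using had_mid[OF H] by blast
      have Fc: "F c \<le> F b / 2 + F z / 2 - d\<^sup>2 / 4"
        unfolding F_def d_def using mid_sum[OF J w s c] by (simp add: dist_commute)
      have "(dist z c)\<^sup>2 \<le> d\<^sup>2 / 4" using c[rule_format, of z] by (simp add: d_def dist_commute)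
      then have "(dist z c)\<^sup>2 \<le> (d/2)\<^sup>2" by (simp add: power_divide)
      moreover have "0 \<le> d/2" by (simp add: d_def)
      ultimately have "dist z c \<le> d/2" by (rule power2_le_imp_le)
      moreover have "d \<le> dist z c + dist c b" unfolding d_def by (rule dist_triangle)
      ultimately have "d/2 \<le> dist c b" by linarith
      moreover have "0 \<le> d/2" by (simp add: d_def)
      ultimately have "(d/2)\<^sup>2 \<le> (dist c b)\<^sup>2" by (rule power_mono)
      then have h1: "(1 - q) * (d\<^sup>2/4) \<le> (1 - q) * (dist c b)\<^sup>2"
        using q by (intro mult_left_mono) (auto simp: power_divide)
      have h2: "F b + (1 - q) * (dist c b)\<^sup>2 \<le> F c" using Suc.IH q_def by blast
      have qs: "(1/2::real)^Suc n = q/2" by (simp add: q_def)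
      have e: "(1 - (1/2::real)^Suc n) * d\<^sup>2 = (1 - q) * (d\<^sup>2/4) * 2 + d\<^sup>2/2"
        unfolding qs by (simp add: field_simps)
      have "F b + (1 - (1/2)^Suc n) * d\<^sup>2 \<le> F z"
        unfolding e using h1 h2 Fc by linarith
      then show "F b + (1 - (1/2)^Suc n) * (dist z b)\<^sup>2 \<le> F z"
        by (simp add: d_def)
    qed
  qed
  let ?d = "(dist z b)\<^sup>2"
  have "(\<lambda>n. F b + (1 - (1/2::real)^n) * ?d) \<longlonglongrightarrow> F b + (1 - 0) * ?d"
    by (intro tendsto_add tendsto_const tendsto_mult tendsto_diff LIMSEQ_power_zero) simp
  then have "F b + (1 - 0) * ?d \<le> F z"
    by (rule LIMSEQ_le_const2) (use ind in blast)
  then show ?thesis unfolding F_def by simp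
qed

lemma jensen:
  fixes p :: "'i \<Rightarrow> 'a::metric_space"
  assumes H: "hadamard_space TYPE('a)"
    and J: "finite J" and w: "\<forall>j\<in>J. w j \<ge> 0" and s: "sum w J = 1"
    and b: "\<forall>y. (\<Sum>j\<in>J. w j * (dist (p j) b)\<^sup>2) \<le> (\<Sum>j\<in>J. w j * (dist (p j) y)\<^sup>2)"
  shows "dist b z \<le> (\<Sum>j\<in>J. w j * dist (p j) z)"
proof -
  define d where "d = dist z b"
  have V: "(\<Sum>j\<in>J. w j * (dist (p j) b)\<^sup>2) + d\<^sup>2 \<le> (\<Sum>j\<in>J. w j * (dist (p j) z)\<^sup>2)"
    unfolding d_def by (rule variance[OF H J w s b])
  have pt: "(dist (p j) z)\<^sup>2 - (dist (p j) b)\<^sup>2 \<le> 2 * d * dist (p j) z - d\<^sup>2" for j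
  proof -
    have "d \<le> dist (p j) z + dist (p j) b" unfolding d_def by (metis dist_commute dist_triangle)
    moreover have "dist (p j) z \<le> d + dist (p j) b" unfolding d_def by (metis dist_commute dist_triangle)
    ultimately have "\<bar>d - dist (p j) z\<bar> \<le> dist (p j) b" by linarith
    then have "\<bar>d - dist (p j) z\<bar>\<^sup>2 \<le> (dist (p j) b)\<^sup>2" by (intro power_mono) auto
    then have "(d - dist (p j) z)\<^sup>2 \<le> (dist (p j) b)\<^sup>2" by simp
    then show ?thesis by (simp add: power2_diff)
  qed
  have "(\<Sum>j\<in>J. w j * (dist (p j) z)\<^sup>2) - (\<Sum>j\<in>J. w j * (dist (p j) b)\<^sup>2)
      = (\<Sum>j\<in>J. w j * ((dist (p j) z)\<^sup>2 - (dist (p j) b)\<^sup>2))"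
    by (simp add: sum_subtractf algebra_simps)
  also have "\<dots> \<le> (\<Sum>j\<in>J. w j * (2 * d * dist (p j) z - d\<^sup>2))"
    by (intro sum_mono mult_left_mono) (use pt w in auto)
  also have "\<dots> = 2 * d * (\<Sum>j\<in>J. w j * dist (p j) z) - d\<^sup>2 * sum w J"
    by (simp add: algebra_simps sum_subtractf sum_distrib_left sum_distrib_right)
  finally have "2 * d * d \<le> 2 * d * (\<Sum>j\<in>J. w j * dist (p j) z)"
    using V s by (simp add: power2_eq_square)
  moreover have "0 \<le> (\<Sum>j\<in>J. w j * dist (p j) z)" using w by (intro sum_nonneg) auto
  ultimately have "d \<le> (\<Sum>j\<in>J. w j * dist (p j) z)"
    by (cases "d = 0") (auto simp: d_def)
  then show ?thesis by (simp add: d_def dist_commute)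
qed


lemma fsum_eq: "finite T \<Longrightarrow> {k. f k \<noteq> 0} \<subseteq> T \<Longrightarrow> fsum f = sum f T"
  unfolding fsum_def by (rule sum.mono_neutral_left) auto

lemma inj_aff: "(c::int) \<noteq> 0 \<Longrightarrow> inj (\<lambda>k::int^'s. i - c *s k)"
  by (auto simp: inj_def vec_eq_iff)

lemma fin_pre:
  fixes g :: "int^'s \<Rightarrow> real"
  assumes "finite {i. g i \<noteq> 0}" "c \<noteq> 0"
  shows "finite {k. g (i - c *s k) \<noteq> 0}"
proof -
  have "{k. g (i - c *s k) \<noteq> 0} = (\<lambda>k. i - c *s k) -` {i. g i \<noteq> 0}" by auto
  then show ?thesis using finite_vimageI[OF assms(1) inj_aff[OF assms(2)]] by simp
qed

lemma scheme_jensen: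
  fixes y :: "int ^ 's \<Rightarrow> 'a::metric_space"
  assumes H: "hadamard_space TYPE('a)" and a: "is_mask a"
  shows "dist (bary_scheme a y i) z \<le> (\<Sum>j\<in>{j. a (i - 2 *s j) \<noteq> 0}. a (i - 2 *s j) * dist (y j) z)"
proof -
  define J where "J = {j. a (i - 2 *s j) \<noteq> 0}"
  have J: "finite J" unfolding J_def using a fin_pre[of a 2 i] by (simp add: is_mask_def)
  have w: "\<forall>j\<in>J. a (i - 2 *s j) \<ge> 0" using a by (simp add: is_mask_def)
  have s: "sum (\<lambda>j. a (i - 2 *s j)) J = 1" using a unfolding is_mask_def fsum_def J_def by simp
  define F where "F v = (\<Sum>j\<in>J. a (i - 2 *s j) * (dist (y j) v)\<^sup>2)" for v
  have FF: "(\<lambda>v. fsum (\<lambda>j. a (i - 2 *s j) * (dist (y j) v)\<^sup>2)) = F"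
    unfolding F_def by (rule ext, rule fsum_eq[OF J]) (auto simp: J_def)
  obtain b where b: "\<forall>v. F b \<le> F v"
    using bary_exists[OF H J w s, of y] unfolding F_def by blast
  have eq: "bary_scheme a y i = arg_min F (\<lambda>_. True)"
    unfolding bary_scheme_def FF ..
  have "F (arg_min F (\<lambda>_. True)) = F b" by (rule arg_min_equality) (use b in auto)
  then have "\<forall>v. F (bary_scheme a y i) \<le> F v" using b eq by simp
  then have "dist (bary_scheme a y i) z \<le> (\<Sum>j\<in>J. a (i - 2 *s j) * dist (y j) z)"
    by (intro jensen[OF H J w s]) (simp add: F_def)
  then show ?thesis by (simp add: J_def)
qed

lemma mask_pow_nonneg: "is_mask a \<Longrightarrow> mask_pow a n i \<ge> 0"
proof (induction n arbitrary: i)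
  case 0 then show ?case by simp
next
  case (Suc n) then show ?case
    by (simp add: fsum_def is_mask_def sum_nonneg)
qed

lemma mask_pow_fin: "is_mask a \<Longrightarrow> finite {i. mask_pow a n i \<noteq> 0}"
proof (induction n)
  case 0 then show ?case by simp
next
  case (Suc n)
  let ?A = "{i. a i \<noteq> 0}" and ?B = "{i. mask_pow a n i \<noteq> 0}"
  have fa: "finite ?A" using Suc.prems by (simp add: is_mask_def)
  have "{i. mask_pow a (Suc n) i \<noteq> 0} \<subseteq> (\<lambda>(s, j). s + 2 *s j) ` (?A \<times> ?B)"
  proof
    fix i assume "i \<in> {i. mask_pow a (Suc n) i \<noteq> 0}"
    then have "fsum (\<lambda>j. a (i - 2 *s j) * mask_pow a n j) \<noteq> 0" by simp
    then obtain j where "a (i - 2 *s j) * mask_pow a n j \<noteq> 0"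
      unfolding fsum_def by (metis (mono_tags, lifting) mem_Collect_eq sum.neutral)
    then have "(i - 2 *s j, j) \<in> ?A \<times> ?B" by auto
    moreover have "i = (\<lambda>(s, j). s + 2 *s j) (i - 2 *s j, j)" by simp
    ultimately show "i \<in> (\<lambda>(s, j). s + 2 *s j) ` (?A \<times> ?B)" by blast
  qed
  then show ?case using fa Suc.IH Suc.prems by (meson finite_SigmaI finite_imageI finite_subset)
qed

lemma vec_id: "i - (2::int) ^ Suc n *s k - 2 *s (j - 2 ^ n *s k) = i - 2 *s (j::int^'s)"
  by (simp add: vec_eq_iff algebra_simps)

lemma mask_pow_shift:
  fixes a :: "int^'s \<Rightarrow> real" and k :: "int^'s"
  assumes a: "is_mask a"
  shows "mask_pow a (Suc n) (i - 2 ^ Suc n *s k) =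
    (\<Sum>j\<in>{j. a (i - 2 *s j) \<noteq> 0}. a (i - 2 *s j) * mask_pow a n (j - 2 ^ n *s k))"
proof -
  define J where "J = {j. a (i - 2 *s j) \<noteq> 0}"
  have J: "finite J" unfolding J_def using a fin_pre[of a 2 i] by (simp add: is_mask_def)
  let ?h = "\<lambda>j::int^'s. j - 2 ^ n *s k"
  have inj: "inj_on ?h J" by (auto simp: inj_on_def)
  have "mask_pow a (Suc n) (i - 2 ^ Suc n *s k) = fsum (\<lambda>j. a (i - 2 ^ Suc n *s k - 2 *s j) * mask_pow a n j)"
    by simp
  also have "\<dots> = sum (\<lambda>j. a (i - 2 ^ Suc n *s k - 2 *s j) * mask_pow a n j) (?h ` J)"
  proof (rule fsum_eq)
    show "finite (?h ` J)" using J by simp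
    show "{j. a (i - 2 ^ Suc n *s k - 2 *s j) * mask_pow a n j \<noteq> 0} \<subseteq> ?h ` J"
    proof
      fix j assume "j \<in> {j. a (i - 2 ^ Suc n *s k - 2 *s j) * mask_pow a n j \<noteq> 0}"
      then have "a (i - 2 ^ Suc n *s k - 2 *s ((j + 2^n *s k) - 2 ^ n *s k)) \<noteq> 0" by simp
      then have "j + 2^n *s k \<in> J" unfolding J_def vec_id by simp
      moreover have "j = ?h (j + 2^n *s k)" by simp
      ultimately show "j \<in> ?h ` J" by blast
    qed
  qed
  also have "\<dots> = (\<Sum>j\<in>J. a (i - 2 ^ Suc n *s k - 2 *s (j - 2 ^ n *s k)) * mask_pow a n (j - 2 ^ n *s k))"
    by (simp add: sum.reindex[OF inj])
  also have "\<dots> = (\<Sum>j\<in>J. a (i - 2 *s j) * mask_pow a n (j - 2 ^ n *s k))"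
    unfolding vec_id ..
  finally show ?thesis by (simp add: J_def)
qed


lemma part1:
  fixes a :: "int ^ 's \<Rightarrow> real" and x :: "int ^ 's \<Rightarrow> 'a::metric_space"
  assumes H: "hadamard_space TYPE('a)" and a: "is_mask a"
  shows "\<forall>i z. dist (((bary_scheme a) ^^ n) x i) z
            \<le> fsum (\<lambda>k. mask_pow a n (i - (2 ^ n) *s k) * dist (x k) z)"
proof (induction n)
  case 0
  show ?case
  proof (intro allI)
    fix i z
    have "fsum (\<lambda>k. mask_pow a 0 (i - (2 ^ 0) *s k) * dist (x k) z) = sum (\<lambda>k. mask_pow a 0 (i - (2 ^ 0) *s k) * dist (x k) z) {i}"
      by (rule fsum_eq) auto
    then show "dist (((bary_scheme a) ^^ 0) x i) z \<le> fsum (\<lambda>k. mask_pow a 0 (i - (2 ^ 0) *s k) * dist (x k) z)"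
      by simp
  qed
next
  case (Suc n)
  show ?case
  proof (intro allI)
    fix i z
    define y where "y = ((bary_scheme a) ^^ n) x"
    define J where "J = {j. a (i - 2 *s j) \<noteq> 0}"
    have J: "finite J" unfolding J_def using a fin_pre[of a 2 i] by (simp add: is_mask_def)
    have w: "\<forall>j\<in>J. a (i - 2 *s j) \<ge> 0" using a by (simp add: is_mask_def)
    define A where "A = mask_pow a n"
    define d where "d k = dist (x k) z" for k
    define K where "K = (\<Union>j\<in>J. {k. A (j - 2^n *s k) \<noteq> 0})"
    have K: "finite K" unfolding K_def A_def
      using J by (auto intro!: fin_pre mask_pow_fin[OF a])
    have "dist (((bary_scheme a) ^^ Suc n) x i) z = dist (bary_scheme a y i) z" by (simp add: y_def)
    also have "\<dots> \<le> (\<Sum>j\<in>J. a (i - 2 *s j) * dist (y j) z)"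
      unfolding J_def by (rule scheme_jensen[OF H a])
    also have "\<dots> \<le> (\<Sum>j\<in>J. a (i - 2 *s j) * fsum (\<lambda>k. A (j - 2^n *s k) * d k))"
      by (intro sum_mono mult_left_mono) (use w Suc.IH in \<open>auto simp: y_def A_def d_def\<close>)
    also have "\<dots> = (\<Sum>j\<in>J. a (i - 2 *s j) * (\<Sum>k\<in>K. A (j - 2^n *s k) * d k))"
    proof (rule sum.cong[OF refl])
      fix j assume "j \<in> J"
      then show "a (i - 2 *s j) * fsum (\<lambda>k. A (j - 2^n *s k) * d k) = a (i - 2 *s j) * (\<Sum>k\<in>K. A (j - 2^n *s k) * d k)"
        by (subst fsum_eq[OF K]) (auto simp: K_def)
    qed
    also have "\<dots> = (\<Sum>k\<in>K. (\<Sum>j\<in>J. a (i - 2 *s j) * A (j - 2^n *s k)) * d k)"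
      by (simp add: sum_distrib_left sum_distrib_right algebra_simps sum.swap[of _ J K])
    also have "\<dots> = (\<Sum>k\<in>K. mask_pow a (Suc n) (i - 2 ^ Suc n *s k) * d k)"
      unfolding A_def J_def mask_pow_shift[OF a] ..
    also have "\<dots> = fsum (\<lambda>k. mask_pow a (Suc n) (i - 2 ^ Suc n *s k) * d k)"
    proof (rule fsum_eq[OF K, symmetric], rule subsetI)
      fix k assume "k \<in> {k. mask_pow a (Suc n) (i - 2 ^ Suc n *s k) * d k \<noteq> 0}"
      then have "(\<Sum>j\<in>J. a (i - 2 *s j) * A (j - 2^n *s k)) \<noteq> 0"
        unfolding A_def J_def mask_pow_shift[OF a] by auto
      then obtain j where "j \<in> J" "A (j - 2^n *s k) \<noteq> 0"
        by (metis (no_types, lifting) mult_zero_right sum.neutral)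
      then show "k \<in> K" unfolding K_def by blast
    qed
    finally show "dist (((bary_scheme a) ^^ Suc n) x i) z \<le> fsum (\<lambda>k. mask_pow a (Suc n) (i - 2 ^ Suc n *s k) * dist (x k) z)"
      by (simp add: d_def)
  qed
qed


theorem mainTheorem3:
  fixes a :: "int ^ 's \<Rightarrow> real" and x :: "int ^ 's \<Rightarrow> 'a::metric_space"
  assumes "hadamard_space TYPE('a)"
    and "is_mask a"
    and "bounded (range x)"
  shows "(\<forall>n i z. dist (((bary_scheme a) ^^ n) x i) z
            \<le> fsum (\<lambda>k. mask_pow a n (i - (2 ^ n) *s k) * dist (x k) z))
       \<and> (\<forall>n i j. dist (((bary_scheme a) ^^ n) x i) (((bary_scheme a) ^^ n) x j)
            \<le> fsum (\<lambda>(k, l). mask_pow a n (i - (2 ^ n) *s k) * mask_pow a n (j - (2 ^ n) *s l)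
                              * dist (x k) (x l)))"
proof (intro conjI allI)
  note P1 = part1[OF assms(1,2), of _ x]
  fix n i z
  show "dist (((bary_scheme a) ^^ n) x i) z
            \<le> fsum (\<lambda>k. mask_pow a n (i - (2 ^ n) *s k) * dist (x k) z)"
    using P1 by blast
next
  note P1 = part1[OF assms(1,2), of _ x]
  fix n i j
  define S where "S = ((bary_scheme a) ^^ n) x"
  define A where "A = mask_pow a n"
  define K where "K = {k. A (i - 2^n *s k) \<noteq> 0}"
  define L where "L = {l. A (j - 2^n *s l) \<noteq> 0}"
  have K: "finite K" unfolding K_def A_def by (intro fin_pre mask_pow_fin[OF assms(2)]) auto
  have L: "finite L" unfolding L_def A_def by (intro fin_pre mask_pow_fin[OF assms(2)]) auto
  have An: "A v \<ge> 0" for v unfolding A_def using mask_pow_nonneg[OF assms(2)] .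
  have "dist (S i) (S j) \<le> fsum (\<lambda>k. A (i - 2^n *s k) * dist (x k) (S j))"
    using P1 unfolding S_def A_def by blast
  also have "\<dots> = (\<Sum>k\<in>K. A (i - 2^n *s k) * dist (x k) (S j))"
    by (rule fsum_eq[OF K]) (auto simp: K_def)
  also have "\<dots> \<le> (\<Sum>k\<in>K. A (i - 2^n *s k) * (\<Sum>l\<in>L. A (j - 2^n *s l) * dist (x k) (x l)))"
  proof (intro sum_mono mult_left_mono An)
    fix k
    have "dist (x k) (S j) = dist (S j) (x k)" by (rule dist_commute)
    also have "\<dots> \<le> fsum (\<lambda>l. A (j - 2^n *s l) * dist (x l) (x k))"
      using P1 unfolding S_def A_def by blast
    also have "\<dots> = (\<Sum>l\<in>L. A (j - 2^n *s l) * dist (x k) (x l))"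
      by (subst fsum_eq[OF L]) (auto simp: L_def dist_commute)
    finally show "dist (x k) (S j) \<le> (\<Sum>l\<in>L. A (j - 2^n *s l) * dist (x k) (x l))" .
  qed
  also have "\<dots> = (\<Sum>(k, l)\<in>K \<times> L. A (i - 2^n *s k) * A (j - 2^n *s l) * dist (x k) (x l))"
    by (simp add: sum.cartesian_product[symmetric] sum_distrib_left mult.assoc)
  also have "\<dots> = fsum (\<lambda>(k, l). A (i - 2^n *s k) * A (j - 2^n *s l) * dist (x k) (x l))"
    by (rule fsum_eq[symmetric]) (use K L in \<open>auto simp: K_def L_def\<close>)
  finally show "dist (((bary_scheme a) ^^ n) x i) (((bary_scheme a) ^^ n) x j)
            \<le> fsum (\<lambda>(k, l). mask_pow a n (i - (2 ^ n) *s k) * mask_pow a n (j - (2 ^ n) *s l)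
                              * dist (x k) (x l))"
    by (simp add: S_def A_def)
qed

end
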